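(* Let $F$ be an absolutely continuous c.d.f. with density $f$ satisfying condition set 1 (defined in the context). Let $i=i(n)$ satisfy $i\to\infty$ and $i/n\to0$ as $n\to\infty$, and define $a_n=F^{-1}\!\left(1-\frac{i}{n}\right)$ and $b_n=\frac{\sqrt{i}}{n f(a_n)}$. Then $\lim_{n\to\infty}\frac{a_n}{b_n}=\infty$.
   Context: Condition set 1: with hazard rate $h(x)\triangleq f(x)/(1-F(x))$, (i) $F^{-1}(1)=\infty$ (the distribution has unbounded support), and (ii) either $\lim_{x\to\infty} x h(x)=c_0$ for some constant $c_0>0$, or $\lim_{x\to\infty}\frac{d}{dx}\frac{1}{h(x)}=0$. *)

theory Defs
  imports "HOL-Analysis.Analysis"
begin

definition quantile :: "(real \<Rightarrow> real) \<Rightarrow> real \<Rightarrow> real" where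
  "quantile F p = Inf {x. p \<le> F x}"

definition hazard :: "(real \<Rightarrow> real) \<Rightarrow> (real \<Rightarrow> real) \<Rightarrow> real \<Rightarrow> real" where
  "hazard f F x = f x / (1 - F x)"

end

theory Submission
  imports Defs
begin

lemma F_basic:
  fixes F f :: "real \<Rightarrow> real"
  assumes f_nonneg: "\<And>x. f x \<ge> 0"
    and f_density: "\<And>x. (f has_integral F x) {..x}"
    and f_total: "(f has_integral 1) UNIV"
  shows F_int: "\<And>x y. x \<le> y \<Longrightarrow> F y - F x = integral {x..y} f"
    and f_intI: "\<And>x y. f integrable_on {x..y}"
    and F_mono: "\<And>x y. x \<le> y \<Longrightarrow> F x \<le> F y"
    and F_nonneg: "\<And>x. F x \<ge> 0"
    and F_cont: "continuous_on UNIV F"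
    and F_sup: "\<And>q. q < 1 \<Longrightarrow> \<exists>x. F x > q"
proof -
  have fi: "f integrable_on {x..y}" for x y
    using integrable_on_subcbox[of f UNIV x y] f_total by auto
  show "f integrable_on {x..y}" for x y by (rule fi)
  have Fint: "F y - F x = integral {x..y} f" if "x \<le> y" for x y
  proof -
    have "(f has_integral (F x + integral {x..y} f)) ({..x} \<union> {x..y})"
      apply (rule has_integral_Un[OF f_density])
      using fi integrable_integral apply blast
      by (rule negligible_subset[of "{x}"]) auto
    moreover have "{..x} \<union> {x..y} = {..y}" using that by auto
    ultimately have "(f has_integral (F x + integral {x..y} f)) {..y}" by simp
    then have "F y = F x + integral {x..y} f" using f_density has_integral_unique by blast
    then show ?thesis by simp
  qed
  show "\<And>x y. x \<le> y \<Longrightarrow> F y - F x = integral {x..y} f" by (rule Fint)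
  show "F x \<le> F y" if "x \<le> y" for x y
    using Fint[OF that] integral_nonneg[OF fi, of x y] f_nonneg by force
  show "F x \<ge> 0" for x
    using has_integral_nonneg[OF f_density] f_nonneg by blast
  show "continuous_on UNIV F"
    unfolding continuous_on_eq_continuous_at[OF open_UNIV]
  proof
    fix x :: real
    have c: "continuous_on {x-1..x+1} (\<lambda>y. F (x-1) + integral {x-1..y} f)"
      by (intro continuous_intros indefinite_integral_continuous_1 fi)
    have e: "\<And>y. y \<in> {x-1..x+1} \<Longrightarrow> F (x-1) + integral {x-1..y} f = F y"
      using Fint by force
    have "continuous_on {x-1..x+1} F" using continuous_on_eq[OF c e] by blast
    then have "continuous_on {x-1<..<x+1} F" by (rule continuous_on_subset) auto
    then show "isCont F x" 
      using continuous_on_eq_continuous_at[of "{x-1<..<x+1}" F] by auto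
  qed
  show "\<exists>x. F x > q" if "q < 1" for q
  proof -
    have A: "\<forall>e>0. \<exists>B>0. \<forall>a b. ball 0 B \<subseteq> cbox a b \<longrightarrow> norm (integral (cbox a b) f - 1) < e"
      using f_total[unfolded has_integral_alt'[of f 1 UNIV]] by simp
    have "1 - q > 0" using that by simp
    with A obtain B where B: "B > 0" "\<And>a b. ball 0 B \<subseteq> cbox a b \<Longrightarrow> norm (integral (cbox a b) f - 1) < 1 - q"
      by blast
    have "ball 0 B \<subseteq> cbox (-B) B" by (auto simp: dist_real_def)
    from B(2)[OF this] have "integral {-B..B} f > q" by auto
    moreover have "integral {-B..B} f \<le> F B"
    proof -
      have "integral {-B..B} f \<le> integral {..B} f"
        by (rule integral_subset_le) (use fi f_density f_nonneg in auto)
      then show ?thesis using f_density integral_unique by metis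
    qed
    ultimately have "q < F B" by linarith
    then show ?thesis by blast
  qed
qed

lemma quantile_eq:
  fixes F :: "real \<Rightarrow> real"
  assumes cont: "continuous_on UNIV F" and mono: "\<And>x y. x \<le> y \<Longrightarrow> F x \<le> F y"
    and x0: "F x0 < p" and ex: "\<exists>x. p \<le> F x"
  shows "F (quantile F p) = p"
proof -
  let ?S = "{x. p \<le> F x}"
  have ne: "?S \<noteq> {}" using ex by auto
  have lb: "x0 \<le> x" if "x \<in> ?S" for x
  proof (rule ccontr)
    assume "\<not> x0 \<le> x"
    then have "F x \<le> F x0" using mono by auto
    then show False using that x0 by auto
  qed
  then have bdd: "bdd_below ?S" by (rule bdd_belowI[of _ x0]) auto
  have cl: "closed ?S"
    using closed_Collect_le[OF continuous_on_const cont] by simp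
  have aS: "quantile F p \<in> ?S"
    unfolding quantile_def by (rule closed_contains_Inf[OF ne bdd cl])
  have "x0 \<le> quantile F p" using lb aS by blast
  moreover have "\<forall>x. x0 \<le> x \<and> x \<le> quantile F p \<longrightarrow> isCont F x"
    using cont by (simp add: continuous_on_eq_continuous_at)
  ultimately obtain y where y: "x0 \<le> y" "y \<le> quantile F p" "F y = p"
    using IVT[of F x0 p "quantile F p"] x0 aS by auto
  then have "y \<in> ?S" by auto
  then have "quantile F p \<le> y" unfolding quantile_def by (rule cInf_lower[OF _ bdd])
  then show ?thesis using y by auto
qed

lemma F_deriv:
  fixes F f :: "real \<Rightarrow> real"
  assumes f_nonneg: "\<And>x. f x \<ge> 0"
    and f_density: "\<And>x. (f has_integral F x) {..x}"
    and f_total: "(f has_integral 1) UNIV"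
    and r: "r > 0" and fc: "continuous_on {x-r..x+r} f"
  shows "(F has_real_derivative f x) (at x)"
proof -
  have d: "((\<lambda>t. F (x-r) + integral {x-r..t} f) has_real_derivative f x) (at x within {x-r..x+r})"
    using integral_has_real_derivative[OF fc, of x] r
    by (auto intro!: derivative_eq_intros)
  have "(F has_real_derivative f x) (at x within {x-r..x+r})"
    apply (rule has_field_derivative_transform_within[OF d r])
    using r apply simp
    using F_int[OF f_nonneg f_density f_total] by force
  moreover have "x \<in> interior {x-r..x+r}" using r by simp
  ultimately show ?thesis using at_within_interior by metis
qed

lemma u_pos:
  fixes F f g :: "real \<Rightarrow> real"
  assumes f_nonneg: "\<And>x. f x \<ge> 0"
    and f_density: "\<And>x. (f has_integral F x) {..x}"
    and f_total: "(f has_integral 1) UNIV"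
    and unbounded: "\<And>x. F x < 1"
    and der: "\<And>x. x > X0 \<Longrightarrow> ((\<lambda>t. 1 / hazard f F t) has_real_derivative g x) (at x)"
    and x0: "x0 > X0"
  shows "f x0 > 0"
proof (rule ccontr)
  assume "\<not> f x0 > 0"
  then have fx0: "f x0 = 0" using f_nonneg[of x0] by linarith
  define u where "u = (\<lambda>t. 1 / hazard f F t)"
  have u_eq: "u t = (1 - F t) / f t" for t by (simp add: u_def hazard_def)
  have u_nn: "u t \<ge> 0" for t unfolding u_eq using unbounded[of t] f_nonneg[of t] by simp
  have u0: "u t = 0 \<longleftrightarrow> f t = 0" for t unfolding u_eq using unbounded[of t] by simp
  have fu: "f t = (1 - F t) / u t" if "u t > 0" for t
    using that unbounded[of t] unfolding u_eq by (auto simp: field_simps)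
  have uder: "x > X0 \<Longrightarrow> (u has_real_derivative g x) (at x)" for x
    using der unfolding u_def by blast
  have ucont: "x > X0 \<Longrightarrow> isCont u x" for x using uder DERIV_isCont by blast
  have Fc: "continuous_on UNIV F" by (rule F_cont[OF f_nonneg f_density f_total])
  have ux0: "u x0 = 0" using u0 fx0 by simp
  show False
  proof (cases "\<exists>y\<ge>x0. u y \<noteq> 0")
    case False
    then have fz: "f y = 0" if "y \<ge> x0" for y using u0 that by auto
    have "(\<lambda>x. if x \<in> {..x0} then f x else 0) = f"
      using fz by (auto intro!: ext)
    then have "(f has_integral 1) {..x0}"
      using f_total has_integral_restrict_UNIV[of "{..x0}" f 1] by simp
    then have "F x0 = 1" using f_density has_integral_unique by blast
    then show False using unbounded[of x0] by simp
  next
    case True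
    then obtain y where y: "y \<ge> x0" "u y \<noteq> 0" by auto
    have yx0: "x0 < y" using y ux0 by (cases "x0 = y") auto
    define Z where "Z = {z \<in> {x0..y}. u z = 0}"
    have uc: "continuous_on {x0..y} u"
      by (rule continuous_at_imp_continuous_on) (use ucont x0 in auto)
    have clZ: "closed Z" unfolding Z_def by (rule continuous_closed_preimage_constant[OF uc]) simp
    have "x0 \<in> Z" using ux0 yx0 unfolding Z_def by auto
    then have neZ: "Z \<noteq> {}" by blast
    have bZ: "bdd_above Z" unfolding Z_def by (rule bdd_aboveI[of _ y]) auto
    define \<alpha> where "\<alpha> = Sup Z"
    have aZ: "\<alpha> \<in> Z" unfolding \<alpha>_def by (rule closed_contains_Sup[OF neZ bZ clZ])
    then have a1: "x0 \<le> \<alpha>" "\<alpha> \<le> y" "u \<alpha> = 0" unfolding Z_def by auto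
    have ay: "\<alpha> < y" using a1 y by (cases "\<alpha> = y") auto
    have upos: "u z > 0" if "\<alpha> < z" "z \<le> y" for z
    proof (rule ccontr)
      assume "\<not> u z > 0"
      then have "u z = 0" using u_nn[of z] by linarith
      then have "z \<in> Z" unfolding Z_def using that a1 by auto
      then have "z \<le> \<alpha>" unfolding \<alpha>_def by (rule cSup_upper[OF _ bZ])
      then show False using that by simp
    qed
    have aX: "\<alpha> > X0" using a1 x0 by simp
    have "((\<lambda>h. (u (\<alpha> + h) - u \<alpha>) / h) \<longlongrightarrow> g \<alpha>) (at 0)"
      using uder[OF aX] unfolding DERIV_def .
    then obtain s where s: "s > 0" "\<And>h. h \<noteq> 0 \<Longrightarrow> \<bar>h\<bar> < s \<Longrightarrow> \<bar>(u (\<alpha> + h) - u \<alpha>) / h - g \<alpha>\<bar> < 1"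
      unfolding LIM_eq by (metis real_norm_def diff_zero zero_less_one)
    define c where "c = \<bar>g \<alpha>\<bar> + 1"
    have c: "c > 0" unfolding c_def by simp
    define d where "d = min s (y - \<alpha>)"
    have d: "d > 0" "d \<le> s" "\<alpha> + d \<le> y" using s ay unfolding d_def by auto
    have ubound: "u x < c * (x - \<alpha>)" if "\<alpha> < x" "x < \<alpha> + d" for x
    proof -
      have "\<bar>(u (\<alpha> + (x - \<alpha>)) - u \<alpha>) / (x - \<alpha>) - g \<alpha>\<bar> < 1"
        using s(2)[of "x - \<alpha>"] that d by auto
      then have "u x / (x - \<alpha>) < c" using a1 unfolding c_def by auto
      then show ?thesis using that by (simp add: divide_less_eq mult.commute)
    qed
    have Gder: "((\<lambda>t. - ln (1 - F t)) has_real_derivative 1 / u x) (at x)"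
      if "\<alpha> < x" "x < y" for x
    proof -
      define r where "r = min (x - \<alpha>) (y - x) / 2"
      have r1: "r > 0" "r \<le> (x - \<alpha>) / 2" "r \<le> (y - x) / 2" using that unfolding r_def by auto
      have r: "r > 0" "\<alpha> < x - r" "x + r < y" using r1 that by auto
      have up: "t \<in> {x-r..x+r} \<Longrightarrow> u t > 0" for t using upos r by auto
      have "continuous_on {x-r..x+r} (\<lambda>t. (1 - F t) / u t)"
        apply (intro continuous_intros)
        apply (rule continuous_on_subset[OF Fc], simp)
        apply (rule continuous_at_imp_continuous_on) using ucont r aX apply force
        using up by force
      then have fc: "continuous_on {x-r..x+r} f"
        by (rule continuous_on_eq) (use fu up in auto)
      have Fd: "(F has_real_derivative f x) (at x)"
        by (rule F_deriv[OF f_nonneg f_density f_total r(1) fc])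
      have ux: "u x > 0" using up r by auto
      have "((\<lambda>t. - ln (1 - F t)) has_real_derivative - (1 / (1 - F x) * (0 - f x))) (at x)"
        by (rule derivative_eq_intros Fd refl | use unbounded[of x] in simp)+
      moreover have "- (1 / (1 - F x) * (0 - f x)) = 1 / u x"
        using ux unbounded[of x] unfolding u_eq by simp
      ultimately show ?thesis by simp
    qed
    define H where "H = (\<lambda>t. - ln (1 - F t) - ln (t - \<alpha>) / c)"
    have Hder: "(H has_real_derivative (1 / u t - 1 / (t - \<alpha>) / c)) (at t)"
      if "\<alpha> < t" "t < y" for t
    proof -
      have L: "((\<lambda>t. ln (t - \<alpha>) / c) has_real_derivative (1 / (t - \<alpha>) / c)) (at t)"
        by (rule derivative_eq_intros refl | use that c in simp)+
      show ?thesis unfolding H_def using DERIV_diff[OF Gder[OF that] L] by simp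
    qed
    have Hd_nn: "1 / u t - 1 / (t - \<alpha>) / c \<ge> 0" if "\<alpha> < t" "t < \<alpha> + d" for t
    proof -
      have "0 < u t" using upos that d by auto
      moreover have "u t \<le> c * (t - \<alpha>)" using ubound that by force
      ultimately have "1 / (c * (t - \<alpha>)) \<le> 1 / u t"
        by (intro divide_left_mono) (use c that in auto)
      then show ?thesis by (simp add: field_simps)
    qed
    define x1 where "x1 = \<alpha> + d / 2"
    have Hmono: "H x \<le> H x1" if "\<alpha> < x" "x \<le> x1" for x
    proof (rule DERIV_nonneg_imp_increasing_open[OF that(2)])
      show "\<exists>y'. (H has_real_derivative y') (at t) \<and> 0 \<le> y'" if "x < t" "t < x1" for t
        using Hder[of t] Hd_nn[of t] that \<open>\<alpha> < x\<close> d unfolding x1_def by auto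
      show "continuous_on {x..x1} H"
      proof (rule continuous_at_imp_continuous_on, rule ballI)
        fix t assume "t \<in> {x..x1}"
        then have "\<alpha> < t" "t < y" using d \<open>\<alpha> < x\<close> unfolding x1_def by auto
        then show "isCont H t" using Hder DERIV_isCont by blast
      qed
    qed
    define K where "K = H x1"
    define x where "x = \<alpha> + min (d / 2) (exp (- (c * \<bar>K\<bar>) - 1))"
    have xa: "\<alpha> < x" "x \<le> x1" unfolding x_def x1_def using d by auto
    have "ln (x - \<alpha>) \<le> ln (exp (- (c * \<bar>K\<bar>) - 1))"
      unfolding x_def using d by (subst ln_le_cancel_iff) auto
    then have lnx: "ln (x - \<alpha>) \<le> - (c * \<bar>K\<bar>) - 1" by simp
    have "- ln (1 - F x) \<ge> 0" using unbounded[of x] F_nonneg[OF f_nonneg f_density f_total, of x]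
      by simp
    moreover have "- ln (x - \<alpha>) / c \<ge> \<bar>K\<bar> + 1 / c"
    proof -
      have "(c * \<bar>K\<bar> + 1) / c \<le> - ln (x - \<alpha>) / c"
        by (rule divide_right_mono) (use lnx c in auto)
      moreover have "(c * \<bar>K\<bar> + 1) / c = \<bar>K\<bar> + 1 / c" using c by (simp add: field_simps)
      ultimately show ?thesis by simp
    qed
    ultimately have "H x \<ge> \<bar>K\<bar> + 1 / c" unfolding H_def by simp
    moreover have "H x \<le> K" using Hmono[OF xa] unfolding K_def .
    ultimately show False using c by (smt (verit) divide_pos_pos)
  qed
qed

lemma haz_bound:
  fixes F f :: "real \<Rightarrow> real"
  assumes f_nonneg: "\<And>x. f x \<ge> 0"
    and f_density: "\<And>x. (f has_integral F x) {..x}"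
    and f_total: "(f has_integral 1) UNIV"
    and unbounded: "\<And>x. F x < 1"
    and cond_ii: "(\<exists>c0>0. ((\<lambda>x. x * hazard f F x) \<longlongrightarrow> c0) at_top)
                 \<or> (\<exists>g. (\<forall>\<^sub>F x in at_top. ((\<lambda>t. 1 / hazard f F t) has_real_derivative g x) (at x))
                        \<and> (g \<longlongrightarrow> 0) at_top)"
  shows "\<exists>c>0. \<exists>X. \<forall>x\<ge>X. c \<le> x * hazard f F x"
  using cond_ii
proof
  assume "\<exists>c0>0. ((\<lambda>x. x * hazard f F x) \<longlongrightarrow> c0) at_top"
  then obtain c0 where c0: "c0 > 0" "((\<lambda>x. x * hazard f F x) \<longlongrightarrow> c0) at_top" by blast
  have "c0 / 2 < c0" using c0 by simp
  from order_tendstoD(1)[OF c0(2) this] obtain X where "\<forall>x\<ge>X. c0 / 2 < x * hazard f F x"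
    unfolding eventually_at_top_linorder by blast
  then show ?thesis using c0 by (intro exI[of _ "c0/2"]) (auto intro!: exI[of _ X] less_imp_le)
next
  assume "\<exists>g. (\<forall>\<^sub>F x in at_top. ((\<lambda>t. 1 / hazard f F t) has_real_derivative g x) (at x))
                        \<and> (g \<longlongrightarrow> 0) at_top"
  then obtain g where g: "\<forall>\<^sub>F x in at_top. ((\<lambda>t. 1 / hazard f F t) has_real_derivative g x) (at x)"
    "(g \<longlongrightarrow> 0) at_top" by blast
  from g(1) obtain X0 where X0: "\<And>x. x \<ge> X0 \<Longrightarrow> ((\<lambda>t. 1 / hazard f F t) has_real_derivative g x) (at x)"
    unfolding eventually_at_top_linorder by blast
  have der: "\<And>x. x > X0 \<Longrightarrow> ((\<lambda>t. 1 / hazard f F t) has_real_derivative g x) (at x)"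
    using X0 by simp
  have fpos: "x > X0 \<Longrightarrow> f x > 0" for x
    by (rule u_pos[OF f_nonneg f_density f_total unbounded der])
  define u where "u = (\<lambda>t. 1 / hazard f F t)"
  have uder: "x > X0 \<Longrightarrow> (u has_real_derivative g x) (at x)" for x
    using der unfolding u_def by blast
  have upos: "x > X0 \<Longrightarrow> u x > 0" for x
    using fpos[of x] unbounded[of x] unfolding u_def hazard_def by simp
  have "(-1/2::real) < 0" "(0::real) < 1/2" by auto
  from order_tendstoD(1)[OF g(2) this(1)] order_tendstoD(2)[OF g(2) this(2)]
  have "\<forall>\<^sub>F x in at_top. \<bar>g x\<bar> < 1/2" by eventually_elim auto
  then obtain X1 where X1: "\<And>x. x \<ge> X1 \<Longrightarrow> \<bar>g x\<bar> < 1/2"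
    unfolding eventually_at_top_linorder by blast
  define X2 where "X2 = max (max (X0 + 1) X1) 0"
  have X2: "X2 > X0" "X2 \<ge> X1" "X2 \<ge> 0" unfolding X2_def by auto
  have ugrow: "u x \<le> u X2 + x / 2" if "x \<ge> X2" for x
  proof -
    have "X2 / 2 - u X2 \<le> x / 2 - u x"
    proof (rule DERIV_nonneg_imp_increasing_open[OF that])
      show "\<exists>y. ((\<lambda>t. t / 2 - u t) has_real_derivative y) (at t) \<and> 0 \<le> y" if "X2 < t" "t < x" for t
      proof (intro exI conjI)
        show "((\<lambda>t. t / 2 - u t) has_real_derivative 1/2 - g t) (at t)"
          using DERIV_diff[OF DERIV_cdivide[OF DERIV_ident, of 2] uder[of t]] that X2 by simp
        show "0 \<le> 1/2 - g t" using X1[of t] that X2 by auto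
      qed
      show "continuous_on {X2..x} (\<lambda>t. t / 2 - u t)"
      proof (rule continuous_at_imp_continuous_on, rule ballI)
        fix t assume "t \<in> {X2..x}"
        then have "t > X0" using X2 by auto
        then show "isCont (\<lambda>t. t / 2 - u t) t"
          using DERIV_isCont[OF uder] by (intro continuous_intros) auto
      qed
    qed
    then show ?thesis using X2 by linarith
  qed
  define X3 where "X3 = max X2 (2 * u X2)"
  have "1 \<le> x * hazard f F x" if "x \<ge> X3" for x
  proof -
    have x: "x \<ge> X2" "x \<ge> 2 * u X2" using that unfolding X3_def by auto
    have ux: "u x \<le> x" using ugrow[OF x(1)] x(2) by linarith
    have up: "u x > 0" using upos X2 x by auto
    have "hazard f F x = 1 / u x" using up unfolding u_def by (simp add: field_simps)
    then have "x * hazard f F x = x / u x" by simp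
    moreover have "1 \<le> x / u x" using ux up by (simp add: field_simps)
    ultimately show ?thesis by simp
  qed
  then show ?thesis by (intro exI[of _ 1]) auto
qed

theorem lemma2:
  fixes F f :: "real \<Rightarrow> real" and i :: "nat \<Rightarrow> nat"
  assumes f_nonneg: "\<And>x. f x \<ge> 0"
    and f_density: "\<And>x. (f has_integral F x) {..x}"
    and f_total: "(f has_integral 1) UNIV"
    and unbounded: "\<And>x. F x < 1"
    and cond_ii: "(\<exists>c0>0. ((\<lambda>x. x * hazard f F x) \<longlongrightarrow> c0) at_top)
                 \<or> (\<exists>g. (\<forall>\<^sub>F x in at_top. ((\<lambda>t. 1 / hazard f F t) has_real_derivative g x) (at x))
                        \<and> (g \<longlongrightarrow> 0) at_top)"
    and i_inf: "filterlim i at_top sequentially"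
    and i_small: "(\<lambda>n. real (i n) / real n) \<longlonglongrightarrow> 0"
  shows "filterlim
           (\<lambda>n. quantile F (1 - real (i n) / real n)
                 / (sqrt (real (i n)) / (real n * f (quantile F (1 - real (i n) / real n)))))
           at_top sequentially"
proof -
  obtain c X where c: "c > 0" and X: "\<And>x. x \<ge> X \<Longrightarrow> c \<le> x * hazard f F x"
    using haz_bound[OF f_nonneg f_density f_total unbounded cond_ii] by blast
  note Fc = F_cont[OF f_nonneg f_density f_total]
  note Fm = F_mono[OF f_nonneg f_density f_total]
  define p where "p = (\<lambda>n. 1 - real (i n) / real n)"
  define a where "a = (\<lambda>n. quantile F (p n))"
  have E1: "\<forall>\<^sub>F n in sequentially. i n \<ge> 1"
    using i_inf unfolding filterlim_at_top by blast
  have E2: "\<forall>\<^sub>F n in sequentially. n \<ge> 1" by (rule eventually_ge_at_top)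
  have E3: "\<forall>\<^sub>F n in sequentially. F M < p n" for M
  proof -
    have "0 < 1 - F M" using unbounded[of M] by simp
    from order_tendstoD(2)[OF i_small this] show ?thesis
      by eventually_elim (auto simp: p_def)
  qed
  have Fa: "\<forall>\<^sub>F n in sequentially. F (a n) = p n"
    using E1 E2 E3[of 0]
  proof eventually_elim
    case (elim n)
    have "p n < 1" using elim unfolding p_def by simp
    then obtain x where "F x > p n" using F_sup[OF f_nonneg f_density f_total] by blast
    then have "\<exists>x. p n \<le> F x" by (auto intro: less_imp_le)
    from quantile_eq[of F, OF Fc _ elim(3) this] Fm show ?case unfolding a_def by blast
  qed
  have a_top: "filterlim a at_top sequentially"
    unfolding filterlim_at_top
  proof
    fix M
    show "\<forall>\<^sub>F n in sequentially. M \<le> a n"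
      using Fa E3[of M]
    proof eventually_elim
      case (elim n)
      show ?case
      proof (rule ccontr)
        assume "\<not> M \<le> a n"
        then have "F (a n) \<le> F M" using Fm by auto
        then show False using elim by simp
      qed
    qed
  qed
  have EX: "\<forall>\<^sub>F n in sequentially. X \<le> a n" using a_top unfolding filterlim_at_top by blast
  have sq: "filterlim (\<lambda>n. c * sqrt (real (i n))) at_top sequentially"
    by (rule filterlim_tendsto_pos_mult_at_top[OF tendsto_const c]
          filterlim_compose[OF sqrt_at_top] filterlim_compose[OF filterlim_real_sequentially i_inf])+
  show ?thesis
  proof (rule filterlim_at_top_mono[OF sq])
    show "\<forall>\<^sub>F n in sequentially. c * sqrt (real (i n)) \<le>
        quantile F (1 - real (i n) / real n) / (sqrt (real (i n)) / (real n * f (quantile F (1 - real (i n) / real n))))"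
      using E1 E2 Fa EX
    proof eventually_elim
      case (elim n)
      have in0: "real (i n) > 0" "real n > 0" using elim by auto
      have h: "f (a n) = hazard f F (a n) * (1 - F (a n))"
        using unbounded[of "a n"] unfolding hazard_def by simp
      have "1 - F (a n) = real (i n) / real n" using elim(3) unfolding p_def by simp
      then have nf: "real n * f (a n) = hazard f F (a n) * real (i n)"
        using h in0 by simp
      have "a n / (sqrt (real (i n)) / (real n * f (a n))) = a n * (real n * f (a n)) / sqrt (real (i n))"
        by simp
      also have "\<dots> = (a n * hazard f F (a n)) * (real (i n) / sqrt (real (i n)))"
        unfolding nf by simp
      also have "real (i n) / sqrt (real (i n)) = sqrt (real (i n))"
        using in0 by (metis real_div_sqrt less_imp_le)
      finally have r: "a n / (sqrt (real (i n)) / (real n * f (a n))) = (a n * hazard f F (a n)) * sqrt (real (i n))" .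
      have "c * sqrt (real (i n)) \<le> (a n * hazard f F (a n)) * sqrt (real (i n))"
        by (rule mult_right_mono[OF X[OF elim(4)]]) simp
      then show ?case using r unfolding a_def p_def by simp
    qed
  qed
qed
end
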